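(* Let $d\ge 3$ and $1\le r<d/2$ be integers. For integers $m,n\ge 0$ let $\overline{C}_{d,r}(m,n)$ denote the number of overpartitions of $n$ with exactly $m$ parts that belong to the class $\overline{\mathcal{C}}_{d,r}$ described in the context below. Then, as formal power series in $x$ and $q$, \[ \sum_{m\ge 0}\sum_{n\ge 0}\overline{C}_{d,r}(m,n)\,x^m q^n=\sum_{m\ge 0}\frac{x^m q^{dm}(-q^r,-q^{d-r};q^d)_m}{(q^{2d};q^{2d})_m}. \]
   Context: Notation: $(a;q)_m=\prod_{i=0}^{m-1}(1-aq^i)$ and $(a_1,a_2;q)_m=(a_1;q)_m(a_2;q)_m$. An overpartition of $n$ is a partition of $n$ (a finite multiset of positive integers summing to $n$) in which the first occurrence of each distinct part size may be overlined; so each part is either overlined or non-overlined, and an overlined value occurs at most once. The empty overpartition is the unique overpartition of $0$ and has $0$ parts. Each part of an overpartition in the class considered here has one of four types. Type $\overline{r}$: an overlined part $\equiv r \pmod d$. Type $\overline{d-r}$: an overlined part $\equiv d-r\pmod d$. Type $\overline{d}$: an overlined part $\equiv 0\pmod d$. Type $d$: a non-overlined part $\equiv 0 \pmod d$. Define the function $A(u,v)$ for $u,v\in\{\overline{r},\overline{d-r},\overline{d},d\}$ by $A(\overline r,\overline r)=d$, $A(\overline r,\overline{d-r})=2r$, $A(\overline r,\overline d)=d+r$, $A(\overline r,d)=r$; $A(\overline{d-r},\overline r)=2d-2r$, $A(\overline{d-r},\overline{d-r})=d$, $A(\overline{d-r},\overline d)=2d-r$, $A(\overline{d-r},d)=d-r$;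 $A(\overline d,\overline r)=2d-r$, $A(\overline d,\overline{d-r})=d+r$, $A(\overline d,\overline d)=2d$, $A(\overline d,d)=d$; $A(d,\overline r)=d-r$, $A(d,\overline{d-r})=r$, $A(d,\overline d)=d$, $A(d,d)=0$. The class $\overline{\mathcal{C}}_{d,r}$ consists of the overpartitions $\lambda$ such that: every part is congruent to $r$, $d-r$ or $0$ modulo $d$, and only multiples of $d$ may be non-overlined (so every part has one of the four types above); writing the parts in weakly increasing order $\lambda_1\le\lambda_2\le\cdots\le\lambda_s$, for every $i$ with $1\le i<s$, if $\lambda_{i+1}$ has type $u$ and $\lambda_i$ has type $v$, then $\lambda_{i+1}-\lambda_i\ge A(u,v)$ and $\lambda_{i+1}-\lambda_i\equiv A(u,v)\pmod{2d}$; and the smallest part $\lambda_1$ is either a non-overlined part $\equiv d\pmod{2d}$, or an overlined part congruent modulo $2d$ to $d+r$, to $2d-r$, or to $0$. The empty overpartition (for which these conditions are vacuous) is counted, so $\overline{C}_{d,r}(0,0)=1$. *)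

theory Defs
  imports "HOL-Library.Multiset" "HOL-Computational_Algebra.Formal_Power_Series"
begin

text \<open>An overpartition is a finite multiset of parts; a part is a pair (k, b) with
  k > 0 its value and b = True iff the part is overlined. An overlined value
  occurs at most once.\<close>

definition is_overpartition :: "(nat \<times> bool) multiset \<Rightarrow> bool" where
  "is_overpartition P \<longleftrightarrow> (\<forall>p \<in># P. 0 < fst p) \<and> (\<forall>k. count P (k, True) \<le> 1)"

definition op_weight :: "(nat \<times> bool) multiset \<Rightarrow> nat" where
  "op_weight P = sum_mset (image_mset fst P)"

datatype ptype = OvR | OvDR | OvD | NonD

definition part_type :: "nat \<Rightarrow> nat \<Rightarrow> nat \<times> bool \<Rightarrow> ptype option" where
  "part_type d r p =
     (if snd p \<and> fst p mod d = r then Some OvR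
      else if snd p \<and> fst p mod d = d - r then Some OvDR
      else if snd p \<and> fst p mod d = 0 then Some OvD
      else if \<not> snd p \<and> fst p mod d = 0 then Some NonD
      else None)"

fun Afun :: "nat \<Rightarrow> nat \<Rightarrow> ptype \<Rightarrow> ptype \<Rightarrow> nat" where
  "Afun d r OvR OvR = d"
| "Afun d r OvR OvDR = 2*r"
| "Afun d r OvR OvD = d + r"
| "Afun d r OvR NonD = r"
| "Afun d r OvDR OvR = 2*d - 2*r"
| "Afun d r OvDR OvDR = d"
| "Afun d r OvDR OvD = 2*d - r"
| "Afun d r OvDR NonD = d - r"
| "Afun d r OvD OvR = 2*d - r"
| "Afun d r OvD OvDR = d + r"
| "Afun d r OvD OvD = 2*d"
| "Afun d r OvD NonD = d"
| "Afun d r NonD OvR = d - r"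
| "Afun d r NonD OvDR = r"
| "Afun d r NonD OvD = d"
| "Afun d r NonD NonD = 0"

definition gap_ok :: "nat \<Rightarrow> nat \<Rightarrow> nat \<times> bool \<Rightarrow> nat \<times> bool \<Rightarrow> bool" where
  "gap_ok d r lo hi \<longleftrightarrow>
     (let a = Afun d r (the (part_type d r hi)) (the (part_type d r lo));
          g = fst hi - fst lo
      in a \<le> g \<and> g mod (2*d) = a mod (2*d))"

definition smallest_ok :: "nat \<Rightarrow> nat \<Rightarrow> nat \<times> bool \<Rightarrow> bool" where
  "smallest_ok d r p \<longleftrightarrow>
     (\<not> snd p \<and> fst p mod (2*d) = d) \<or>
     (snd p \<and> fst p mod (2*d) \<in> {(d + r) mod (2*d), (2*d - r) mod (2*d), 0})"

definition in_Cbar :: "nat \<Rightarrow> nat \<Rightarrow> (nat \<times> bool) multiset \<Rightarrow> bool" where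
  "in_Cbar d r P \<longleftrightarrow>
     is_overpartition P \<and> (\<forall>p \<in># P. part_type d r p \<noteq> None) \<and>
     (\<exists>xs. mset xs = P \<and> sorted (map fst xs) \<and>
        (\<forall>i. Suc i < length xs \<longrightarrow> gap_ok d r (xs ! i) (xs ! Suc i)) \<and>
        (xs \<noteq> [] \<longrightarrow> smallest_ok d r (hd xs)))"

definition Cbar :: "nat \<Rightarrow> nat \<Rightarrow> nat \<Rightarrow> nat \<Rightarrow> nat" where
  "Cbar d r m n = card {P. in_Cbar d r P \<and> size P = m \<and> op_weight P = n}"

text \<open>Coefficient of x^m in the right-hand side, as a power series in q.\<close>
definition rhs_coeff :: "nat \<Rightarrow> nat \<Rightarrow> nat \<Rightarrow> rat fps" where
  "rhs_coeff d r m =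
     fps_X ^ (d * m)
     * (\<Prod>i<m. (1 + fps_X ^ (d * i + r)) * (1 + fps_X ^ (d * i + (d - r))))
     * inverse (\<Prod>i<m. 1 - fps_X ^ (2 * d * (i + 1)))"

end

theory Submission
  imports Defs "HOL-Library.Product_Lexorder"
begin

unbundle fps_syntax

definition cc :: "nat \<Rightarrow> nat \<Rightarrow> ptype \<Rightarrow> nat" where
  "cc d r a = (case a of NonD \<Rightarrow> 0 | OvR \<Rightarrow> r | OvDR \<Rightarrow> d - r | OvD \<Rightarrow> d)"

definition kk :: "ptype \<Rightarrow> nat" where
  "kk a = (case a of NonD \<Rightarrow> 0 | OvR \<Rightarrow> 1 | OvDR \<Rightarrow> 1 | OvD \<Rightarrow> 2)"

definition ov :: "ptype \<Rightarrow> bool" where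
  "ov a = (a \<noteq> NonD)"

definition shf :: "nat \<Rightarrow> nat \<times> bool \<Rightarrow> nat \<times> bool" where
  "shf s p = (fst p + s, snd p)"

fun parts :: "nat \<Rightarrow> nat \<Rightarrow> (ptype \<times> nat) list \<Rightarrow> (nat \<times> bool) list" where
  "parts d r [] = []"
| "parts d r ((a,g)#xs) = (d + cc d r a + 2*d*g, ov a) # map (shf (d * (kk a + 2*g))) (parts d r xs)"

fun wt :: "nat \<Rightarrow> nat \<Rightarrow> (ptype \<times> nat) list \<Rightarrow> nat" where
  "wt d r [] = 0"
| "wt d r ((a,g)#xs) = d + cc d r a + 2*d*g + length xs * (d * (kk a + 2*g)) + wt d r xs"

lemma UNIV_ptype: "(UNIV :: ptype set) = {OvR, OvDR, OvD, NonD}"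
proof -
  { fix x :: ptype have "x \<in> {OvR, OvDR, OvD, NonD}" by (cases x) auto }
  then show ?thesis by auto
qed

lemma finite_ptype[simp]: "finite (UNIV :: ptype set)"
  by (simp add: UNIV_ptype)

lemma pt_shift: "part_type d r (v + d*j, b) = part_type d r (v, b)"
  by (simp add: part_type_def)

lemma pt_shf: "part_type d r (shf (d*j) p) = part_type d r p"
  by (cases p) (simp add: shf_def pt_shift)

lemma gap_shf: "gap_ok d r (shf (d*j) p) (shf (d*j) q) = gap_ok d r p q"
  by (simp add: gap_ok_def pt_shf) (simp add: shf_def)

lemma parts_Cons_gen: "parts d r (x#xs) = (d + cc d r (fst x) + 2*d*snd x, ov (fst x)) # map (shf (d*(kk (fst x) + 2*snd x))) (parts d r xs)"
  by (cases x) simp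

lemma length_parts[simp]: "length (parts d r xs) = length xs"
  by (induction d r xs rule: parts.induct) auto

context
  fixes d r :: nat
  assumes d3: "3 \<le> d" and r1: "1 \<le> r" and r2: "2 * r < d"
begin

unbundle fps_syntax

lemma pt_head: "part_type d r (d + cc d r a + 2*d*g, ov a) = Some a"
proof -
  have e: "d + cc d r a + 2*d*g = cc d r a + d * (1 + 2*g)" by (simp add: algebra_simps)
  show ?thesis unfolding e pt_shift
    using d3 r1 r2 by (cases a) (auto simp: part_type_def cc_def ov_def)
qed

lemma A_eq: "Afun d r b a + cc d r a = cc d r b + d * kk a"
  using d3 r1 r2 by (cases a; cases b) (auto simp: cc_def kk_def)

lemma A_pos: "ov b \<Longrightarrow> 0 < Afun d r b a"
  using d3 r1 r2 by (cases a; cases b) (auto simp: ov_def)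

lemma cc_le: "cc d r a \<le> d * kk a"
  using d3 r1 r2 by (cases a) (auto simp: cc_def kk_def)

lemma cc_lt: "ov a \<Longrightarrow> cc d r a < d * kk a"
  using d3 r1 r2 by (cases a) (auto simp: cc_def kk_def ov_def)


lemma parts_lb: "q \<in> set (parts d r xs) \<Longrightarrow> d \<le> fst q"
  by (induction xs arbitrary: q) (fastforce simp: shf_def parts_Cons_gen)+

lemma parts_types: "q \<in> set (parts d r xs) \<Longrightarrow> part_type d r q \<noteq> None"
proof (induction xs arbitrary: q)
  case (Cons x xs)
  then show ?case using pt_head[of "fst x" "snd x"]
    by (auto simp: pt_shf parts_Cons_gen)
qed simp

lemma head_le: "q \<in> set (parts d r xs) \<Longrightarrow> d + cc d r a + 2*d*g \<le> fst (shf (d * (kk a + 2*g)) q)"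
  using parts_lb[of q xs] cc_le[of a] by (auto simp: shf_def algebra_simps)

lemma head_lt: "ov a \<Longrightarrow> q \<in> set (parts d r xs) \<Longrightarrow> d + cc d r a + 2*d*g < fst (shf (d * (kk a + 2*g)) q)"
  using parts_lb[of q xs] cc_lt[of a] by (auto simp: shf_def algebra_simps)

lemma sorted_fst: "sorted (map fst (parts d r xs))"
proof (induction xs)
  case Nil then show ?case by simp
next
  case (Cons x xs)
  obtain a g where x: "x = (a,g)" by (cases x)
  have "sorted (map fst (map (shf (d * (kk a + 2*g))) (parts d r xs)))"
    using Cons.IH by (simp add: sorted_map shf_def)
  then show ?case using head_le[of _ xs a g] by (auto simp: x)
qed

lemma sorted_lex: "sorted (parts d r xs)"
proof (induction xs)
  case Nil then show ?case by simp
next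
  case (Cons x xs)
  obtain a g where x: "x = (a,g)" by (cases x)
  have m: "mono (shf s)" for s by (auto simp: mono_def shf_def less_eq_prod_def)
  have "sorted (map (shf (d * (kk a + 2*g))) (parts d r xs))"
    unfolding sorted_map by (rule sorted_wrt_mono_rel[OF _ Cons.IH]) (simp add: monoD[OF m])
  moreover have "(d + cc d r a + 2*d*g, ov a) \<le> shf (d * (kk a + 2*g)) q" if "q \<in> set (parts d r xs)" for q
  proof (cases "ov a")
    case True then show ?thesis using head_lt[OF True that, of g] by (simp add: less_eq_prod_def)
  next
    case False then show ?thesis using head_le[OF that, of a g] by (auto simp: less_eq_prod_def)
  qed
  ultimately show ?case by (auto simp: x)
qed

lemma gaps: "Suc i < length (parts d r xs) \<Longrightarrow> gap_ok d r (parts d r xs ! i) (parts d r xs ! Suc i)"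
proof (induction xs arbitrary: i)
  case Nil then show ?case by simp
next
  case (Cons x xs)
  obtain a g where x: "x = (a,g)" by (cases x)
  show ?case
  proof (cases i)
    case 0
    obtain y xs' where xs: "xs = y # xs'" using Cons.prems by (cases xs) auto
    obtain b h where y: "y = (b,h)" by (cases y)
    let ?A = "Afun d r b a"
    have t1: "part_type d r (shf (d * (kk a + 2 * g)) (d + cc d r b + 2 * d * h, ov b)) = Some b"
      by (simp add: pt_shf pt_head)
    have diff: "fst (shf (d * (kk a + 2 * g)) (d + cc d r b + 2 * d * h, ov b)) - (d + cc d r a + 2*d*g) = ?A + (2*d)*h"
      using A_eq[of b a] by (simp add: shf_def algebra_simps)
    have "gap_ok d r (d + cc d r a + 2*d*g, ov a) (shf (d * (kk a + 2 * g)) (d + cc d r b + 2 * d * h, ov b))"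
      unfolding gap_ok_def Let_def t1 pt_head option.sel using diff by simp
    then show ?thesis using 0 by (simp add: x xs y)
  next
    case (Suc j)
    have "Suc j < length (parts d r xs)" using Cons.prems Suc by (simp add: x)
    from Cons.IH[OF this] show ?thesis using Suc Cons.prems
      by (simp add: x gap_shf[where j="kk a + 2*g"])
  qed
qed

lemma smallest: "xs \<noteq> [] \<Longrightarrow> smallest_ok d r (hd (parts d r xs))"
proof -
  assume "xs \<noteq> []"
  then obtain a g xs' where xs: "xs = (a,g) # xs'" by (cases xs) auto
  have e: "(c + 2*d*g) mod (2*d) = c mod (2*d)" for c
    by (metis add.commute mod_mult_self2 mult.commute)
  have f1: "(d + 0) mod (2*d) = d" using d3 by simp
  have f3: "(d + (d - r)) mod (2*d) = 2*d - r" using r1 r2 by (subst mod_less) auto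
  have f5: "(2*d - r) mod (2*d) = 2*d - r" using r1 r2 by (subst mod_less) auto
  have f4: "(d + d) mod (2*d) = 0" by (metis mod_self mult_2)
  have "smallest_ok d r (d + cc d r a + 2*d*g, ov a)"
  proof (cases a)
    case OvR then show ?thesis by (simp add: smallest_ok_def e cc_def ov_def)
  next
    case OvDR then show ?thesis using f3 f5 by (simp add: smallest_ok_def e cc_def ov_def del: diff_add_inverse)
  next
    case OvD then show ?thesis using f4 by (simp add: smallest_ok_def e cc_def ov_def)
  next
    case NonD then show ?thesis using f1 by (simp add: smallest_ok_def e cc_def ov_def)
  qed
  then show ?thesis by (simp add: xs)
qed

lemma count_shf: "count (mset (map (shf s) L)) (k,b) = (if s \<le> k then count (mset L) (k - s, b) else 0)"
  by (induction L) (auto simp: shf_def)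

lemma count_parts: "count (mset (parts d r xs)) (k,True) \<le> 1"
proof (induction xs arbitrary: k)
  case Nil then show ?case by simp
next
  case (Cons x xs)
  obtain a g where x: "x = (a,g)" by (cases x)
  show ?case
  proof (cases "(d + cc d r a + 2*d*g, ov a) = (k, True)")
    case True
    then have "ov a" "k = d + cc d r a + 2*d*g" by auto
    have "(k,True) \<notin> set (map (shf (d * (kk a + 2*g))) (parts d r xs))"
    proof
      assume "(k,True) \<in> set (map (shf (d * (kk a + 2*g))) (parts d r xs))"
      then obtain q where q: "q \<in> set (parts d r xs)" "(k,True) = shf (d * (kk a + 2*g)) q" by auto
      have "k = fst (shf (d * (kk a + 2*g)) q)" using q(2) by (metis fst_conv)
      with head_lt[OF \<open>ov a\<close> q(1), of g] \<open>k = d + cc d r a + 2*d*g\<close> show False by simp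
    qed
    then show ?thesis using True by (simp add: x count_eq_zero_iff)
  next
    case False
    then show ?thesis using Cons.IH by (auto simp: x count_shf[unfolded mset_map])
  qed
qed

lemma sum_shf: "sum_list (map fst (map (shf s) L)) = sum_list (map fst L) + length L * s"
  by (induction L) (auto simp: shf_def)

lemma weight_parts: "sum_list (map fst (parts d r xs)) = wt d r xs"
  by (induction xs) (auto simp: sum_shf[unfolded map_map] parts_Cons_gen split: prod.splits)

lemma inj_shf: "inj (shf s)"
  by (auto simp: inj_def shf_def prod_eq_iff)

lemma parts_inj: "parts d r xs = parts d r ys \<Longrightarrow> xs = ys"
proof (induction xs arbitrary: ys)
  case Nil then show ?case by (cases ys) auto
next
  case (Cons x xs)
  obtain a g where x: "x = (a,g)" by (cases x)
  obtain y ys' where ys: "ys = y # ys'" using Cons.prems by (cases ys) (auto simp: x)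
  obtain b h where y: "y = (b,h)" by (cases y)
  have hd: "(d + cc d r a + 2*d*g, ov a) = (d + cc d r b + 2*d*h, ov b)"
    and tl: "map (shf (d * (kk a + 2*g))) (parts d r xs) = map (shf (d * (kk b + 2*h))) (parts d r ys')"
    using Cons.prems by (simp_all add: x ys y)
  have "a = b" using pt_head[of a g] pt_head[of b h] hd by simp
  moreover have "g = h" using hd d3 \<open>a = b\<close> by simp
  ultimately have "parts d r xs = parts d r ys'" using tl inj_map_eq_map[OF inj_shf] by simp
  then show ?case using Cons.IH \<open>a = b\<close> \<open>g = h\<close> by (simp add: x ys y)
qed

lemma pt_snd: "part_type d r p = Some b \<Longrightarrow> snd p = ov b"
  by (cases b) (auto simp: part_type_def ov_def split: if_splits)

lemma in_Cbar_parts: "in_Cbar d r (mset (parts d r xs))"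
proof -
  have 1: "\<forall>p\<in>#mset (parts d r xs). 0 < fst p" using parts_lb[of _ xs] d3 by fastforce
  have 2: "\<forall>k. count (mset (parts d r xs)) (k, True) \<le> 1" using count_parts by blast
  have 3: "\<forall>p\<in>#mset (parts d r xs). part_type d r p \<noteq> None" using parts_types by simp
  have 4: "\<forall>i. Suc i < length (parts d r xs) \<longrightarrow> gap_ok d r (parts d r xs ! i) (parts d r xs ! Suc i)"
    using gaps by blast
  have 5: "parts d r xs \<noteq> [] \<longrightarrow> smallest_ok d r (hd (parts d r xs))"
    using smallest by (cases xs) auto
  show ?thesis unfolding in_Cbar_def is_overpartition_def
    using 1 2 3 4 5 sorted_fst[of xs] by blast
qed

lemma surj_parts:
  "sorted (map fst ys) \<Longrightarrow> (\<forall>y\<in>set ys. part_type d r y \<noteq> None) \<Longrightarrow>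
   (\<forall>i. Suc i < length ys \<longrightarrow> gap_ok d r (ys!i) (ys!Suc i)) \<Longrightarrow>
   (ys \<noteq> [] \<longrightarrow> (\<exists>a g. hd ys = (d + cc d r a + 2*d*g, ov a))) \<Longrightarrow> \<exists>xs. parts d r xs = ys"
proof (induction "length ys" arbitrary: ys rule: less_induct)
  case less
  show ?case
  proof (cases ys)
    case Nil then show ?thesis by (intro exI[of _ "[]"]) simp
  next
    case (Cons y ys')
    obtain a g where y: "y = (d + cc d r a + 2*d*g, ov a)" using less.prems(4) Cons by auto
    show ?thesis
    proof (cases ys')
      case Nil then show ?thesis using Cons y by (intro exI[of _ "[(a,g)]"]) simp
    next
      case (Cons y2 ys'')
      note ys = \<open>ys = y # ys'\<close> Cons
      define s where "s = d * (kk a + 2*g)"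
      obtain b where b: "part_type d r y2 = Some b" using less.prems(2) ys by auto
      have sy2: "snd y2 = ov b" using pt_snd[OF b] .
      have gp: "gap_ok d r y y2" using less.prems(3)[rule_format, of 0] ys by simp
      have pa: "part_type d r y = Some a" using pt_head y by simp
      have le: "fst y \<le> fst y2" using less.prems(1) ys by simp
      let ?A = "Afun d r b a"
      have A1: "?A \<le> fst y2 - fst y" and A2: "(fst y2 - fst y) mod (2*d) = ?A mod (2*d)"
        using gp unfolding gap_ok_def Let_def b pa option.sel by auto
      have "2*d dvd (fst y2 - fst y) - ?A" using A1 A2 mod_eq_dvd_iff_nat by blast
      then obtain h where h: "(fst y2 - fst y) - ?A = 2*d*h" by (auto elim: dvdE)
      have fy2: "fst y2 = s + (d + cc d r b + 2*d*h)"
        using h A1 le A_eq[of b a] y unfolding s_def by (simp add: algebra_simps)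
      have geq: "s \<le> fst z" if "z \<in> set ys'" for z
      proof -
        have "fst y2 \<le> fst z" using less.prems(1) that ys by auto
        then show ?thesis using fy2 by simp
      qed
      define zs where "zs = map (\<lambda>z. (fst z - s, snd z)) ys'"
      have ys'z: "ys' = map (shf s) zs"
        unfolding zs_def map_map by (rule sym, rule map_idI) (auto simp: shf_def geq)
      have sD: "shf s = shf (d * (kk a + 2*g))" by (simp add: s_def)
      have h1: "sorted (map fst zs)"
      proof -
        have "sorted (map fst ys')" using less.prems(1) ys by simp
        then show ?thesis unfolding ys'z by (simp add: sorted_map shf_def)
      qed
      have h2: "\<forall>z\<in>set zs. part_type d r z \<noteq> None"
        using less.prems(2) unfolding ys(1) ys'z by (auto simp: sD pt_shf)
      have h3: "\<forall>i. Suc i < length zs \<longrightarrow> gap_ok d r (zs!i) (zs!Suc i)"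
      proof (intro allI impI)
        fix i assume i: "Suc i < length zs"
        have "Suc (Suc i) < length ys" using i by (simp add: ys(1) ys'z)
        then have "gap_ok d r (ys!Suc i) (ys!Suc (Suc i))" using less.prems(3) by blast
        moreover have "ys ! Suc i = shf s (zs ! i)" "ys ! Suc (Suc i) = shf s (zs ! Suc i)"
          using i by (simp_all add: ys(1) ys'z)
        ultimately show "gap_ok d r (zs!i) (zs!Suc i)" unfolding sD by (simp add: gap_shf)
      qed
      have h4: "zs \<noteq> [] \<longrightarrow> (\<exists>a g. hd zs = (d + cc d r a + 2*d*g, ov a))"
        using fy2 sy2 by (auto simp: zs_def ys(2) intro!: exI[of _ b] exI[of _ h] prod_eqI)
      have "length zs < length ys" by (simp add: zs_def ys)
      from less.hyps[OF this h1 h2 h3 h4] obtain xs' where xs': "parts d r xs' = zs" by blast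
      show ?thesis
        by (intro exI[of _ "(a,g) # xs'"]) (simp add: xs' ys(1) ys'z[unfolded s_def, symmetric] y)
    qed
  qed
qed

lemma good_head:
  assumes pos: "0 < fst y" and pt: "part_type d r y = Some a" and sm: "smallest_ok d r y"
  shows "\<exists>a g. y = (d + cc d r a + 2*d*g, ov a)"
proof -
  obtain v b where yv: "y = (v, b)" by (cases y)
  define q where "q = v div (2*d)"
  define \<rho> where "\<rho> = v mod (2*d)"
  have v: "v = \<rho> + 2*d*q" unfolding q_def \<rho>_def by simp
  have vd: "v mod d = \<rho> mod d" unfolding \<rho>_def by (simp add: mod_mod_cancel)
  have m1: "(d + r) mod (2*d) = d + r" using r2 by simp
  have m2: "(2*d - r) mod (2*d) = 2*d - r" using r1 r2 by simp
  have m3: "(d + r) mod d = r" using r2 by simp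
  have m4: "(2*d - r) mod d = d - r"
  proof -
    have "2*d - r = (d - r) + d * 1" using r2 by simp
    then show ?thesis using r2 by (metis mod_less mod_mult_self2 diff_less r1 d3 less_le_trans zero_less_one zero_less_numeral le_less_trans less_imp_le_nat not_less_eq_eq)
  qed
  have sb: "b = ov a" using pt_snd[OF pt] yv by simp
  show ?thesis
  proof (cases a)
    case NonD
    then have "\<not> b" using sb by (simp add: ov_def)
    then have "\<rho> = d" using sm yv unfolding smallest_ok_def \<rho>_def by simp
    then show ?thesis using v yv sb NonD by (intro exI[of _ NonD] exI[of _ q]) (simp add: cc_def)
  next
    case OvR
    then have b: "b" and vm: "v mod d = r" using pt yv by (auto simp: part_type_def split: if_splits)
    have "\<rho> \<in> {d + r, 2*d - r, 0}" using sm yv b m1 m2 unfolding smallest_ok_def \<rho>_def by simp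
    moreover have "\<rho> \<noteq> 2*d - r" using vm vd m4 r2 by auto
    moreover have "\<rho> \<noteq> 0"
    proof
      assume "\<rho> = 0" then show False using vm vd r1 by simp
    qed
    ultimately have "\<rho> = d + r" by blast
    then show ?thesis using v yv sb OvR by (intro exI[of _ OvR] exI[of _ q]) (simp add: cc_def)
  next
    case OvDR
    then have b: "b" and vm: "v mod d = d - r" using pt yv r2 by (auto simp: part_type_def split: if_splits)
    have "\<rho> \<in> {d + r, 2*d - r, 0}" using sm yv b m1 m2 unfolding smallest_ok_def \<rho>_def by simp
    moreover have "\<rho> \<noteq> d + r" using vm vd m3 r2 by auto
    moreover have "\<rho> \<noteq> 0"
    proof
      assume "\<rho> = 0" then show False using vm vd r2 by simp
    qed
    ultimately have "\<rho> = 2*d - r" by blast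
    then show ?thesis using v yv sb OvDR r2 by (intro exI[of _ OvDR] exI[of _ q]) (simp add: cc_def)
  next
    case OvD
    then have b: "b" and vm: "v mod d = 0" using pt yv by (auto simp: part_type_def split: if_splits)
    have "\<rho> \<in> {d + r, 2*d - r, 0}" using sm yv b m1 m2 unfolding smallest_ok_def \<rho>_def by simp
    moreover have "\<rho> \<noteq> d + r" using vm vd m3 r1 by auto
    moreover have "\<rho> \<noteq> 2*d - r" using vm vd m4 r2 by auto
    ultimately have "\<rho> = 0" by blast
    then have "q \<noteq> 0" using v pos yv by auto
    then obtain q' where q': "q = Suc q'" by (cases q) auto
    have "v = d + d + 2*d*q'" using v \<open>\<rho> = 0\<close> q' by simp
    then show ?thesis using yv sb OvD by (intro exI[of _ OvD] exI[of _ q']) (simp add: cc_def)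
  qed
qed

lemma opw: "op_weight (mset L) = sum_list (map fst L)"
  unfolding op_weight_def by (simp add: sum_mset_sum_list flip: mset_map)

lemma mset_parts_inj: "inj (\<lambda>xs. mset (parts d r xs))"
proof (rule injI)
  fix xs ys assume "mset (parts d r xs) = mset (parts d r ys)"
  then have "sort (parts d r xs) = parts d r ys"
    using properties_for_sort[of "parts d r ys" "parts d r xs"] sorted_lex[of ys] by simp
  then have "parts d r xs = parts d r ys" using sorted_lex[of xs] by (simp add: sorted_sort_id)
  then show "xs = ys" by (rule parts_inj)
qed

definition LL :: "nat \<Rightarrow> nat \<Rightarrow> (ptype \<times> nat) list set" where
  "LL m n = {xs. length xs = m \<and> wt d r xs = n}"

lemma Cbar_eq: "Cbar d r m n = card (LL m n)"
proof -
  have "{P. in_Cbar d r P \<and> size P = m \<and> op_weight P = n} = (\<lambda>xs. mset (parts d r xs)) ` LL m n"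
  proof (intro set_eqI iffI)
    fix P assume "P \<in> {P. in_Cbar d r P \<and> size P = m \<and> op_weight P = n}"
    then have P: "in_Cbar d r P" "size P = m" "op_weight P = n" by auto
    then obtain ys where ys: "mset ys = P" "sorted (map fst ys)"
      "\<forall>i. Suc i < length ys \<longrightarrow> gap_ok d r (ys ! i) (ys ! Suc i)"
      "ys \<noteq> [] \<longrightarrow> smallest_ok d r (hd ys)"
      and ty: "\<forall>p\<in>#P. part_type d r p \<noteq> None" and ov: "is_overpartition P"
      unfolding in_Cbar_def by blast
    have t2: "\<forall>y\<in>set ys. part_type d r y \<noteq> None" using ty ys(1) by auto
    have t4: "ys \<noteq> [] \<longrightarrow> (\<exists>a g. hd ys = (d + cc d r a + 2*d*g, ov a))"
    proof
      assume ne: "ys \<noteq> []"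
      then have hin: "hd ys \<in># P" using ys(1) by (metis hd_in_set set_mset_mset)
      then obtain a where "part_type d r (hd ys) = Some a" using ty by auto
      moreover have "0 < fst (hd ys)" using ov hin unfolding is_overpartition_def by blast
      ultimately show "\<exists>a g. hd ys = (d + cc d r a + 2*d*g, ov a)"
        using good_head ys(4) ne by blast
    qed
    obtain xs where xs: "parts d r xs = ys" using surj_parts[OF ys(2) t2 ys(3) t4] by blast
    have "length xs = m" using P(2) ys(1) xs by (metis length_parts size_mset)
    moreover have "wt d r xs = n" using P(3) ys(1) xs weight_parts[of xs] opw by metis
    ultimately show "P \<in> (\<lambda>xs. mset (parts d r xs)) ` LL m n"
      unfolding LL_def using xs ys(1) by blast
  next
    fix P assume "P \<in> (\<lambda>xs. mset (parts d r xs)) ` LL m n"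
    then obtain xs where "P = mset (parts d r xs)" "length xs = m" "wt d r xs = n"
      unfolding LL_def by blast
    then show "P \<in> {P. in_Cbar d r P \<and> size P = m \<and> op_weight P = n}"
      using in_Cbar_parts[of xs] by (simp add: opw weight_parts)
  qed
  then show ?thesis unfolding Cbar_def
    by (simp add: card_image inj_on_subset[OF mset_parts_inj])
qed

definition del :: "nat \<Rightarrow> ptype \<Rightarrow> nat" where
  "del m a = d + cc d r a + m * (d * kk a)"

definition KK :: "nat \<Rightarrow> nat" where
  "KK m = 2 * d * Suc m"

lemma wt_Cons: "length t = m \<Longrightarrow> wt d r ((a,g)#t) = del m a + KK m * g + wt d r t"
  by (simp add: del_def KK_def algebra_simps)

lemma wt_ge: "x \<in> set xs \<Longrightarrow> snd x \<le> wt d r xs"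
proof (induction xs)
  case (Cons y xs)
  obtain a g where y: "y = (a,g)" by (cases y)
  have "g \<le> 2*d*g" using d3 by simp
  then have h1: "g \<le> wt d r (y#xs)" unfolding y wt.simps by linarith
  have h2: "wt d r xs \<le> wt d r (y#xs)" by (simp add: y)
  show ?case using Cons h1 h2 by (auto simp: y)
qed simp

lemma finite_LL: "finite (LL m n)"
proof (rule finite_subset)
  show "LL m n \<subseteq> {xs. set xs \<subseteq> UNIV \<times> {..n} \<and> length xs = m}"
    unfolding LL_def using wt_ge by fastforce
  show "finite {xs. set xs \<subseteq> (UNIV :: ptype set) \<times> {..n} \<and> length xs = m}"
    by (rule finite_lists_length_eq) simp
qed

lemma card_rec: "card (LL (Suc m) n) =
   (\<Sum>a\<in>UNIV. if del m a \<le> n then card (LL m (n - del m a)) else 0)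
   + (if KK m \<le> n then card (LL (Suc m) (n - KK m)) else 0)"
proof -
  define Z where "Z a = {xs \<in> LL (Suc m) n. hd xs = (a,0)}" for a
  define B where "B = {xs \<in> LL (Suc m) n. snd (hd xs) \<noteq> 0}"
  have split: "LL (Suc m) n = (\<Union>a\<in>UNIV. Z a) \<union> B"
    unfolding Z_def B_def by (auto simp: prod_eq_iff)
  have fZ: "finite (Z a)" for a unfolding Z_def using finite_LL by simp
  have fB: "finite B" unfolding B_def using finite_LL by simp
  have dis: "(\<Union>a\<in>UNIV. Z a) \<inter> B = {}" unfolding Z_def B_def by auto
  have cZ: "card (\<Union>a\<in>UNIV. Z a) = (\<Sum>a\<in>UNIV. card (Z a))"
    by (rule card_UN_disjoint) (auto simp: fZ[unfolded Z_def] Z_def)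
  have Za: "card (Z a) = (if del m a \<le> n then card (LL m (n - del m a)) else 0)" for a
  proof -
    have "Z a = (if del m a \<le> n then (\<lambda>t. (a,0) # t) ` LL m (n - del m a) else {})"
    proof (intro set_eqI iffI)
      fix xs assume "xs \<in> Z a"
      then have xs: "length xs = Suc m" "wt d r xs = n" "hd xs = (a,0)" unfolding Z_def LL_def by auto
      then obtain t where t: "xs = (a,0) # t" "length t = m" by (cases xs) auto
      then have "wt d r xs = del m a + wt d r t" using wt_Cons[OF t(2), of a 0] by simp
      then show "xs \<in> (if del m a \<le> n then (\<lambda>t. (a,0) # t) ` LL m (n - del m a) else {})"
        using xs t unfolding LL_def by auto
    next
      fix xs assume "xs \<in> (if del m a \<le> n then (\<lambda>t. (a,0) # t) ` LL m (n - del m a) else {})"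
      then obtain t where t: "xs = (a,0) # t" "length t = m" "wt d r t = n - del m a" "del m a \<le> n"
        unfolding LL_def by (auto split: if_splits)
      then show "xs \<in> Z a" unfolding Z_def LL_def using wt_Cons[of t m a 0] by simp
    qed
    then show ?thesis by (simp add: card_image)
  qed
  define bump where "bump xs = (fst (hd xs), Suc (snd (hd xs))) # tl xs" for xs :: "(ptype \<times> nat) list"
  have cB: "card B = (if KK m \<le> n then card (LL (Suc m) (n - KK m)) else 0)"
  proof -
    have "B = (if KK m \<le> n then bump ` LL (Suc m) (n - KK m) else {})"
    proof (intro set_eqI iffI)
      fix xs assume "xs \<in> B"
      then have xs: "length xs = Suc m" "wt d r xs = n" "snd (hd xs) \<noteq> 0" unfolding B_def LL_def by auto
      then obtain y t where yt: "xs = y # t" "length t = m" by (cases xs) auto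
      obtain a b where yab: "y = (a,b)" by (cases y)
      obtain g where "b = Suc g" using xs(3) yt yab not0_implies_Suc by auto
      then have t: "xs = (a,Suc g) # t" "length t = m" using yt yab by auto
      have w: "wt d r xs = KK m + wt d r ((a,g)#t)" using t
        by (simp add: KK_def algebra_simps)
      have "xs = bump ((a,g)#t)" unfolding bump_def t by simp
      then show "xs \<in> (if KK m \<le> n then bump ` LL (Suc m) (n - KK m) else {})"
        using xs w t unfolding LL_def by auto
    next
      fix xs assume "xs \<in> (if KK m \<le> n then bump ` LL (Suc m) (n - KK m) else {})"
      then obtain ys where ys: "xs = bump ys" "length ys = Suc m" "wt d r ys = n - KK m" "KK m \<le> n"
        unfolding LL_def by (auto split: if_splits)
      then obtain a g t where t: "ys = (a,g) # t" "length t = m" by (cases ys) auto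
      have "xs = (a, Suc g) # t" using ys t unfolding bump_def by simp
      moreover have "wt d r ((a, Suc g) # t) = KK m + wt d r ys"
        using t by (simp add: KK_def algebra_simps)
      ultimately show "xs \<in> B" unfolding B_def LL_def using ys t by simp
    qed
    moreover have "inj_on bump (LL (Suc m) (n - KK m))"
    proof (rule inj_onI)
      fix xs ys assume "xs \<in> LL (Suc m) (n - KK m)" "ys \<in> LL (Suc m) (n - KK m)" "bump xs = bump ys"
      then show "xs = ys" unfolding LL_def bump_def
        by (cases xs; cases ys) (auto simp: prod_eq_iff)
    qed
    ultimately show ?thesis by (simp add: card_image)
  qed
  have "card (LL (Suc m) n) = card (\<Union>a\<in>UNIV. Z a) + card B"
    unfolding split by (rule card_Un_disjoint) (auto simp: fZ fB dis)
  then show ?thesis using cZ Za cB by simp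
qed

lemma sum_del: "(\<Sum>a\<in>UNIV. (fps_X :: rat fps) ^ (del m a)) = fps_X ^ d * ((1 + fps_X ^ (d*m + r)) * (1 + fps_X ^ (d*m + (d - r))))"
proof -
  have e1: "del m NonD = d" "del m OvR = d + (d*m + r)" "del m OvDR = d + (d*m + (d - r))"
    "del m OvD = d + (d*m + r) + (d*m + (d - r))"
    using r2 by (simp_all add: del_def cc_def kk_def algebra_simps)
  have "(\<Sum>a\<in>UNIV. (fps_X :: rat fps) ^ (del m a)) = fps_X ^ del m OvR + fps_X ^ del m OvDR + fps_X ^ del m OvD + fps_X ^ del m NonD"
    by (simp add: UNIV_ptype)
  also have "\<dots> = fps_X ^ d * ((1 + fps_X ^ (d*m + r)) * (1 + fps_X ^ (d*m + (d - r))))"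
    unfolding e1 power_add[of "fps_X::rat fps" d] power_add[of "fps_X::rat fps" "d + (d*m+r)"]
    by (simp add: distrib_left distrib_right mult_ac)
  finally show ?thesis .
qed

lemma rhs_rec: "rhs_coeff d r (Suc m) * (1 - fps_X ^ (KK m)) = rhs_coeff d r m * (\<Sum>a\<in>UNIV. fps_X ^ (del m a))"
proof -
  define P where "P = (\<Prod>i<m. (1 + (fps_X :: rat fps) ^ (d * i + r)) * (1 + fps_X ^ (d * i + (d - r))))"
  define Q where "Q = (\<Prod>i<m. 1 - (fps_X :: rat fps) ^ (2 * d * (i + 1)))"
  define E where "E = 1 - (fps_X :: rat fps) ^ (KK m)"
  define T where "T = (1 + (fps_X :: rat fps) ^ (d*m + r)) * (1 + fps_X ^ (d*m + (d - r)))"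
  have E0: "E $ 0 = 1" using d3 unfolding E_def KK_def by simp
  have iE: "inverse E * E = 1" using E0 by (intro inverse_mult_eq_1) simp
  have R: "rhs_coeff d r m = fps_X ^ (d * m) * P * inverse Q" unfolding rhs_coeff_def P_def Q_def ..
  have "rhs_coeff d r (Suc m) = fps_X ^ (d * m + d) * (P * T) * inverse (Q * E)"
    unfolding rhs_coeff_def P_def Q_def E_def KK_def T_def prod.lessThan_Suc
    by (simp add: mult.commute[of d])
  also have "\<dots> = (fps_X ^ (d * m) * P * inverse Q) * (fps_X ^ d * T) * inverse E"
    by (simp only: fps_inverse_mult power_add mult_ac)
  finally have "rhs_coeff d r (Suc m) * E = rhs_coeff d r m * (fps_X ^ d * T) * (inverse E * E)"
    unfolding R by (simp only: mult_ac)
  then have "rhs_coeff d r (Suc m) * E = rhs_coeff d r m * (fps_X ^ d * T)" by (simp only: iE mult_1_right)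
  then show ?thesis unfolding sum_del E_def T_def .
qed

lemma rhs_nth: "rhs_coeff d r (Suc m) $ n =
   (\<Sum>a\<in>UNIV. if del m a \<le> n then rhs_coeff d r m $ (n - del m a) else 0)
   + (if KK m \<le> n then rhs_coeff d r (Suc m) $ (n - KK m) else 0)"
proof -
  have "(rhs_coeff d r (Suc m) * (1 - fps_X ^ (KK m))) $ n = (rhs_coeff d r m * (\<Sum>a\<in>UNIV. fps_X ^ (del m a))) $ n"
    by (simp only: rhs_rec)
  then have "rhs_coeff d r (Suc m) $ n - (if n < KK m then 0 else rhs_coeff d r (Suc m) $ (n - KK m))
     = (\<Sum>a\<in>UNIV. if n < del m a then 0 else rhs_coeff d r m $ (n - del m a))"
    by (simp only: right_diff_distrib mult_1_right fps_sub_nth sum_distrib_left fps_sum_nth fps_X_power_mult_right_nth)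
  then have "rhs_coeff d r (Suc m) $ n = (\<Sum>a\<in>UNIV. if n < del m a then 0 else rhs_coeff d r m $ (n - del m a))
     + (if n < KK m then 0 else rhs_coeff d r (Suc m) $ (n - KK m))"
    by (simp only: diff_eq_eq)
  moreover have "(\<Sum>a\<in>UNIV. if n < del m a then 0 else rhs_coeff d r m $ (n - del m a))
     = (\<Sum>a\<in>UNIV. if del m a \<le> n then rhs_coeff d r m $ (n - del m a) else 0)"
    by (intro sum.cong) auto
  moreover have "(if n < KK m then 0 else rhs_coeff d r (Suc m) $ (n - KK m))
     = (if KK m \<le> n then rhs_coeff d r (Suc m) $ (n - KK m) else 0)" by auto
  ultimately show ?thesis by simp
qed

lemma main_count: "of_nat (card (LL m n)) = rhs_coeff d r m $ n"
proof (induction m arbitrary: n)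
  case 0
  have "LL 0 n = (if n = 0 then {[]} else {})" unfolding LL_def by auto
  moreover have "rhs_coeff d r 0 = 1" unfolding rhs_coeff_def by simp
  ultimately show ?case by simp
next
  case (Suc m)
  show ?case
  proof (induction n rule: less_induct)
    case (less n)
    have K: "0 < KK m" using d3 by (simp add: KK_def)
    have "(of_nat (card (LL (Suc m) n)) :: rat) =
      (\<Sum>a\<in>UNIV. if del m a \<le> n then of_nat (card (LL m (n - del m a))) else 0)
      + (if KK m \<le> n then of_nat (card (LL (Suc m) (n - KK m))) else 0)"
      unfolding card_rec[of m n] of_nat_add of_nat_sum by (auto intro!: sum.cong)
    also have "\<dots> = rhs_coeff d r (Suc m) $ n"
      unfolding rhs_nth[of m n] Suc.IH using less.IH[of "n - KK m"] K by (cases "KK m \<le> n") auto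
    finally show ?case .
  qed
qed

end

theorem theorem4p1:
  fixes d r :: nat
  assumes "3 \<le> d" and "1 \<le> r" and "2 * r < d"
  shows "\<forall>m n. of_nat (Cbar d r m n) = fps_nth (rhs_coeff d r m) n"
  using Cbar_eq[OF assms] main_count[OF assms] by simp

end
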